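(* Let $\tau>0$, let $W:\mathbb{R}^n\to\mathbb{R}$ be a continuous positive definite function, and let $V:\mathbb{R}^n\to\mathbb{R}$ be a continuous function for which there exist class-$\mathcal{K}_\infty$ functions $\kappa_1,\kappa_2$ with $\kappa_1(|x|)\le V(x)\le\kappa_2(|x|)$ for all $x\in\mathbb{R}^n$. Then there exist a function $K_c$ of class $\mathcal{K}_\infty$ and a function $K_d$, positive, continuous and increasing on $[0,+\infty)$, such that for all $x\in\mathbb{R}^n$ and all $z\ge0$, $$\frac{K_c(V(x)+z)}{K_d(V(x)+z)}\le\frac12W(x)+\frac{1}{4\tau}z.$$
   Context: $|\cdot|$ is the Euclidean norm. A class-$\mathcal{K}_\infty$ function is a continuous function $[0,\infty)\to[0,\infty)$ that is zero at zero, strictly increasing and unbounded. *)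

theory Defs
  imports "HOL-Analysis.Analysis"
begin

definition class_Kinf :: "(real \<Rightarrow> real) \<Rightarrow> bool" where
  "class_Kinf k \<longleftrightarrow> continuous_on {0..} k \<and> (\<forall>s\<ge>0. k s \<ge> 0) \<and> k 0 = 0
     \<and> strict_mono_on {0..} k \<and> (\<forall>M. \<exists>s\<ge>0. M < k s)"

definition pos_definite :: "('a::real_normed_vector \<Rightarrow> real) \<Rightarrow> bool" where
  "pos_definite W \<longleftrightarrow> W 0 = 0 \<and> (\<forall>x. x \<noteq> 0 \<longrightarrow> W x > 0)"

end

theory Submission imports Defs begin

lemma infconv:
  fixes m :: "real \<Rightarrow> real" and d :: "real \<Rightarrow> real \<Rightarrow> real" and T :: "real set"
  assumes T: "T \<noteq> {}" and m0: "\<forall>t\<in>T. m t \<ge> 0" and d0: "\<forall>s t. d s t \<ge> 0"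
    and dL: "\<forall>s s' t. \<bar>d s t - d s' t\<bar> \<le> \<bar>s - s'\<bar>"
  defines "f \<equiv> \<lambda>s. Inf ((\<lambda>t. m t + d s t) ` T)"
  shows infconv_lower: "\<And>s t. t \<in> T \<Longrightarrow> f s \<le> m t + d s t"
    and infconv_greatest: "\<And>s L. (\<And>t. t\<in>T \<Longrightarrow> L \<le> m t + d s t) \<Longrightarrow> L \<le> f s"
    and infconv_cont: "continuous_on UNIV f"
proof -
  have bdd: "bdd_below ((\<lambda>t. m t + d s t) ` T)" for s
    using m0 d0 by (intro bdd_belowI[where m=0]) (auto intro: add_nonneg_nonneg)
  show low: "f s \<le> m t + d s t" if "t \<in> T" for s t
    unfolding f_def using that bdd by (intro cInf_lower) auto
  show gr: "L \<le> f s" if "\<And>t. t\<in>T \<Longrightarrow> L \<le> m t + d s t" for s L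
    unfolding f_def using that T by (intro cInf_greatest) auto
  have "f s - \<bar>s - s'\<bar> \<le> f s'" for s s'
  proof -
    have "f s - \<bar>s - s'\<bar> \<le> m t + d s' t" if "t \<in> T" for t
    proof -
      have "f s \<le> m t + d s t" using low that by blast
      moreover have "d s t \<le> d s' t + \<bar>s - s'\<bar>" using dL[rule_format, of s t s'] by linarith
      ultimately show ?thesis by linarith
    qed
    then show ?thesis by (rule gr)
  qed
  then have "dist (f s) (f s') \<le> 1 * dist s s'" for s s'
    by (smt (verit, best) dist_real_def)
  then have "1-lipschitz_on UNIV f" by (intro lipschitz_onI) auto
  then show "continuous_on UNIV f" by (rule lipschitz_on_continuous_on)
qed

lemma lemB:
  fixes m :: "real \<Rightarrow> real"
  assumes m0: "\<And>t. t \<ge> 0 \<Longrightarrow> m t \<ge> 0"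
    and mc: "\<And>a b. 0 < a \<Longrightarrow> a \<le> b \<Longrightarrow> \<exists>c>0. \<forall>t\<in>{a..b}. c \<le> m t"
  shows "\<exists>Kc Kd :: real \<Rightarrow> real. class_Kinf Kc \<and>
           (\<forall>s\<ge>0. Kd s > 0) \<and> continuous_on {0..} Kd \<and> strict_mono_on {0..} Kd \<and>
           (\<forall>s\<ge>0. Kc s \<le> m s * Kd s)"
proof -
  define da where "da = (\<lambda>s t::real. max 0 (s - t))"
  define db where "db = (\<lambda>s t::real. max 0 (t - s))"
  define a where "a = (\<lambda>s. Inf ((\<lambda>t. m t + da s t) ` {0<..1}))"
  define b where "b = (\<lambda>s. Inf ((\<lambda>t. m t + db s t) ` {1..}))"
  have daL: "\<forall>s s' t. \<bar>da s t - da s' t\<bar> \<le> \<bar>s - s'\<bar>" unfolding da_def by auto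
  have dbL: "\<forall>s s' t. \<bar>db s t - db s' t\<bar> \<le> \<bar>s - s'\<bar>" unfolding db_def by auto
  have Ta: "{0<..(1::real)} \<noteq> {}" by auto
  have Tb: "{(1::real)..} \<noteq> {}" by auto
  have ma: "\<forall>t\<in>{0<..(1::real)}. m t \<ge> 0" using m0 by auto
  have mb: "\<forall>t\<in>{(1::real)..}. m t \<ge> 0" using m0 by auto
  have a_low: "\<And>s t. t \<in> {0<..1} \<Longrightarrow> a s \<le> m t + da s t"
    and a_gr: "\<And>s L. (\<And>t. t\<in>{0<..1} \<Longrightarrow> L \<le> m t + da s t) \<Longrightarrow> L \<le> a s"
    and a_cont: "continuous_on UNIV a"
    using infconv[OF Ta ma _ daL] unfolding a_def da_def by auto
  have b_low: "\<And>s t. t \<in> {1..} \<Longrightarrow> b s \<le> m t + db s t"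
    and b_gr: "\<And>s L. (\<And>t. t\<in>{1..} \<Longrightarrow> L \<le> m t + db s t) \<Longrightarrow> L \<le> b s"
    and b_cont: "continuous_on UNIV b"
    using infconv[OF Tb mb _ dbL] unfolding b_def db_def by auto
  have a_nn: "a s \<ge> 0" for s by (rule a_gr) (use m0 in \<open>auto simp: da_def intro: add_nonneg_nonneg\<close>)
  have a_mono: "a s \<le> a s'" if "s \<le> s'" for s s'
  proof (rule a_gr)
    fix t :: real assume "t \<in> {0<..1}"
    then have "a s \<le> m t + da s t" by (rule a_low)
    also have "\<dots> \<le> m t + da s' t" using that by (auto simp: da_def)
    finally show "a s \<le> m t + da s' t" .
  qed
  have b_mono: "b s' \<le> b s" if "s \<le> s'" for s s'
  proof (rule b_gr)
    fix t :: real assume "t \<in> {1..}"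
    then have "b s' \<le> m t + db s' t" by (rule b_low)
    also have "\<dots> \<le> m t + db s t" using that by (auto simp: db_def)
    finally show "b s' \<le> m t + db s t" .
  qed
  have a_pos: "a s > 0" if "s > 0" for s
  proof -
    define u where "u = min s 1"
    have u: "0 < u" "u \<le> 1" "u \<le> s" using that by (auto simp: u_def)
    obtain c where c: "c > 0" "\<forall>t\<in>{u/2..1}. c \<le> m t" using mc[of "u/2" 1] u by auto
    have "min c (s/2) \<le> a s"
    proof (rule a_gr)
      fix t :: real assume t: "t \<in> {0<..1}"
      show "min c (s/2) \<le> m t + da s t"
      proof (cases "t \<ge> u/2")
        case True
        then have "c \<le> m t" using c t by auto
        moreover have "da s t \<ge> 0" by (simp add: da_def)
        ultimately show ?thesis by linarith
      next
        case False
        then have "s/2 \<le> da s t" using u by (auto simp: da_def)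
        moreover have "m t \<ge> 0" using m0 t by auto
        ultimately show ?thesis by linarith
      qed
    qed
    then show ?thesis using c that by linarith
  qed
  have b_pos: "b s > 0" if s0: "s \<ge> 0" for s
  proof -
    obtain c where c: "c > 0" "\<forall>t\<in>{1..s+1}. c \<le> m t" using mc[of 1 "s+1"] s0 by auto
    have "min c 1 \<le> b s"
    proof (rule b_gr)
      fix t :: real assume t: "t \<in> {1..}"
      show "min c 1 \<le> m t + db s t"
      proof (cases "t \<le> s + 1")
        case True
        then have "c \<le> m t" using c t by auto
        moreover have "db s t \<ge> 0" by (simp add: db_def)
        ultimately show ?thesis by linarith
      next
        case False
        then have "1 \<le> db s t" by (auto simp: db_def)
        moreover have "m t \<ge> 0" using m0 t by auto
        ultimately show ?thesis by linarith
      qed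
    qed
    then show ?thesis using c by linarith
  qed
  define Kc where "Kc = (\<lambda>s. s * a (min s 1))"
  define F where "F = (\<lambda>s. 1 + (1 + a 1) / b (max s 1))"
  define Kd where "Kd = (\<lambda>s. (1 + s) * F s)"
  have a1: "a 1 > 0" using a_pos by auto
  have F1: "F s \<ge> 1" for s
  proof -
    have "b (max s 1) > 0" by (rule b_pos) auto
    then show ?thesis using a_nn[of 1] by (simp add: F_def)
  qed
  have Fmono: "F s \<le> F s'" if "s \<le> s'" for s s'
  proof -
    have "b (max s' 1) \<le> b (max s 1)" using b_mono that by auto
    moreover have "b (max s' 1) > 0" by (rule b_pos) auto
    ultimately have "1 / b (max s 1) \<le> 1 / b (max s' 1)" by (simp add: frac_le)
    then have "(1 + a 1) * (1 / b (max s 1)) \<le> (1 + a 1) * (1 / b (max s' 1))"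
      using a1 by (intro mult_left_mono) auto
    then show ?thesis by (simp add: F_def)
  qed
  have "class_Kinf Kc"
    unfolding class_Kinf_def
  proof (intro conjI allI impI)
    show "continuous_on {0..} Kc" unfolding Kc_def
      by (intro continuous_intros continuous_on_compose2[OF a_cont]) auto
    show "0 \<le> Kc s" if "s \<ge> 0" for s using that a_nn by (simp add: Kc_def)
    show "Kc 0 = 0" by (simp add: Kc_def)
    show "strict_mono_on {0..} Kc"
    proof (rule strict_mono_onI)
      fix r s :: real assume rs: "r \<in> {0..}" "s \<in> {0..}" "r < s"
      have "a (min r 1) \<le> a (min s 1)" using rs by (intro a_mono) auto
      moreover have "a (min s 1) > 0" using rs by (intro a_pos) auto
      ultimately have "r * a (min r 1) \<le> r * a (min s 1)" using rs by (intro mult_left_mono) auto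
      also have "\<dots> < s * a (min s 1)" using rs \<open>a (min s 1) > 0\<close> by simp
      finally show "Kc r < Kc s" by (simp add: Kc_def)
    qed
    fix M :: real
    define s where "s = max 1 ((\<bar>M\<bar> + 1) / a 1)"
    have "(\<bar>M\<bar> + 1) / a 1 * a 1 \<le> s * a 1" using a1 by (intro mult_right_mono) (auto simp: s_def)
    then have "\<bar>M\<bar> + 1 \<le> s * a 1" using a1 by simp
    moreover have "min s 1 = 1" by (simp add: s_def)
    ultimately show "\<exists>s\<ge>0. M < Kc s"
      by (intro exI[of _ s]) (auto simp: Kc_def s_def)
  qed
  moreover have "\<forall>s\<ge>0. Kd s > 0" using F1 by (auto simp: Kd_def intro!: mult_pos_pos) (smt (verit) F1)
  moreover have "continuous_on {0..} Kd"
  proof -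
    have "continuous_on {0..} (\<lambda>s. b (max s 1))"
      by (intro continuous_on_compose2[OF b_cont] continuous_intros) auto
    moreover have "\<forall>s\<in>{0..}. b (max s 1) \<noteq> 0" using b_pos by (smt (verit))
    ultimately show ?thesis unfolding Kd_def F_def by (intro continuous_intros) auto
  qed
  moreover have "strict_mono_on {0..} Kd"
  proof (rule strict_mono_onI)
    fix r s :: real assume rs: "r \<in> {0..}" "s \<in> {0..}" "r < s"
    have "(1 + r) * F r \<le> (1 + r) * F s" using rs Fmono by (intro mult_left_mono) auto
    also have "\<dots> < (1 + s) * F s" using rs F1[of s] by (intro mult_strict_right_mono) auto
    finally show "Kd r < Kd s" by (simp add: Kd_def)
  qed
  moreover have "\<forall>s\<ge>0. Kc s \<le> m s * Kd s"
  proof (intro allI impI)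
    fix s :: real assume s: "s \<ge> 0"
    have Kd1: "Kd s \<ge> 1" using F1[of s] s unfolding Kd_def
      using mult_mono[of 1 "1+s" 1 "F s"] by simp
    have ms: "m s \<ge> 0" using m0 s by auto
    show "Kc s \<le> m s * Kd s"
    proof (cases "s \<le> 1")
      case True
      show ?thesis
      proof (cases "s = 0")
        case True then show ?thesis using ms Kd1 by (simp add: Kc_def)
      next
        case False
        then have "a s \<le> m s" using a_low[of s s] s True by (auto simp: da_def)
        moreover have "s * a s \<le> a s" using True a_nn[of s] s by (simp add: mult_left_le_one_le)
        moreover have "m s \<le> m s * Kd s" using ms Kd1 by (simp add: mult_le_cancel_left1)
        ultimately show ?thesis using True by (simp add: Kc_def)
      qed
    next
      case False
      have bs: "b s \<le> m s" using b_low[of s s] False by (auto simp: db_def)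
      have bp: "b s > 0" using b_pos s by auto
      have "max s 1 = s" using False by auto
      then have KdB: "Kd s \<ge> s * ((1 + a 1) / b s)" unfolding Kd_def F_def using s a1 bp
        by (smt (verit, best) divide_nonneg_pos mult_mono)
      moreover have "s * a 1 \<le> s * ((1 + a 1) / b s) * b s" using bp s by (simp add: mult_left_mono)
      moreover have "s * ((1 + a 1) / b s) * b s \<le> Kd s * m s"
        using bs bp s a1 KdB Kd1 by (intro mult_mono) auto
      ultimately show ?thesis using False by (simp add: Kc_def mult.commute)
    qed
  qed
  ultimately show ?thesis by blast
qed


theorem lemma2:
  fixes \<tau> :: real and W V :: "real ^ 'n \<Rightarrow> real" and \<kappa>1 \<kappa>2 :: "real \<Rightarrow> real"
  assumes "\<tau> > 0"
    and "continuous_on UNIV W" and "pos_definite W"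
    and "continuous_on UNIV V"
    and "class_Kinf \<kappa>1" and "class_Kinf \<kappa>2"
    and "\<And>x. \<kappa>1 (norm x) \<le> V x \<and> V x \<le> \<kappa>2 (norm x)"
  shows "\<exists>Kc Kd :: real \<Rightarrow> real.
           class_Kinf Kc \<and>
           (\<forall>s\<ge>0. Kd s > 0) \<and> continuous_on {0..} Kd \<and> strict_mono_on {0..} Kd \<and>
           (\<forall>x. \<forall>z\<ge>0. Kc (V x + z) / Kd (V x + z) \<le> W x / 2 + z / (4 * \<tau>))"
proof -
  note tau = assms(1) and Wc = assms(2) and Vc = assms(4) and Vb = assms(7)
  have W0: "W x \<ge> 0" for x using assms(3) unfolding pos_definite_def
    by (cases "x = 0") (auto intro: less_imp_le)
  have Wp: "W x > 0" if "x \<noteq> 0" for x using assms(3) that unfolding pos_definite_def by auto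
  have V0: "V x \<ge> 0" for x using Vb[of x] assms(5) unfolding class_Kinf_def
    by (metis norm_ge_zero order_trans)
  have V00: "V 0 = 0" using Vb[of 0] V0[of 0] assms(6) unfolding class_Kinf_def by auto
  define Q where "Q = (\<lambda>s. {W x / 2 + z / (4 * \<tau>) | x z. z \<ge> 0 \<and> V x + z = s})"
  define M where "M = (\<lambda>s. Inf (Q s))"
  have Qnn: "q \<ge> 0" if "q \<in> Q s" for q s
    using that tau W0 unfolding Q_def by (auto intro!: add_nonneg_nonneg)
  have Qne: "Q s \<noteq> {}" if "s \<ge> 0" for s
    unfolding Q_def using that V00 by (auto intro!: exI[of _ 0] exI[of _ s])
  have M_le: "M (V x + z) \<le> W x / 2 + z / (4 * \<tau>)" if "z \<ge> 0" for x z
    unfolding M_def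
  proof (rule cInf_lower)
    show "W x / 2 + z / (4 * \<tau>) \<in> Q (V x + z)" unfolding Q_def using that by blast
    show "bdd_below (Q (V x + z))" using Qnn by (intro bdd_belowI[where m=0]) auto
  qed
  have M_gr: "L \<le> M s" if "s \<ge> 0" "\<And>q. q \<in> Q s \<Longrightarrow> L \<le> q" for s L
    unfolding M_def using that Qne by (intro cInf_greatest) auto
  have m0: "M t \<ge> 0" if "t \<ge> 0" for t using M_gr[OF that] Qnn by blast
  have mc: "\<exists>c>0. \<forall>t\<in>{a..b}. c \<le> M t" if ab: "0 < a" "a \<le> b" for a b
  proof -
    define S where "S = {x. a/2 \<le> V x} \<inter> {x. V x \<le> b}"
    have "closed S" unfolding S_def using Vc
      by (intro closed_Int closed_Collect_le continuous_intros) auto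
    obtain R where R: "R \<ge> 0" "b < \<kappa>1 R" using assms(5) unfolding class_Kinf_def by blast
    have "norm x \<le> R" if "x \<in> S" for x
    proof (rule ccontr)
      assume "\<not> norm x \<le> R"
      then have "\<kappa>1 R < \<kappa>1 (norm x)" using assms(5) R unfolding class_Kinf_def
        by (intro strict_mono_onD[of "{0..}" \<kappa>1]) auto
      then show False using Vb[of x] R that unfolding S_def by auto
    qed
    then have "bounded S" by (intro boundedI) auto
    then have "compact S" using \<open>closed S\<close> using compact_eq_bounded_closed by blast
    obtain c where c: "c > 0" "\<forall>x\<in>S. c \<le> W x"
    proof (cases "S = {}")
      case True then show ?thesis using that[of 1] by auto
    next
      case False
      obtain x0 where x0: "x0 \<in> S" "\<forall>y\<in>S. W x0 \<le> W y"
        using continuous_attains_inf[OF \<open>compact S\<close> False continuous_on_subset[OF Wc]] by auto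
      have "x0 \<noteq> 0" using x0(1) V00 ab unfolding S_def by auto
      then show ?thesis using that[of "W x0"] Wp x0 by auto
    qed
    show ?thesis
    proof (intro exI[of _ "min (c/2) (a / (8 * \<tau>))"] conjI ballI)
      show "0 < min (c/2) (a / (8 * \<tau>))" using c tau ab by auto
      fix t assume t: "t \<in> {a..b}"
      show "min (c/2) (a / (8 * \<tau>)) \<le> M t"
      proof (rule M_gr)
        show "t \<ge> 0" using t ab by auto
        fix q assume "q \<in> Q t"
        then obtain x z where xz: "q = W x / 2 + z / (4 * \<tau>)" "z \<ge> 0" "V x + z = t"
          unfolding Q_def by blast
        show "min (c/2) (a / (8 * \<tau>)) \<le> q"
        proof (cases "z \<ge> t/2")
          case True
          then have "a / (8 * \<tau>) \<le> z / (4 * \<tau>)" using t tau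
            by (simp add: divide_simps) 
          then show ?thesis using xz W0[of x] by linarith
        next
          case False
          then have "x \<in> S" using xz t unfolding S_def by auto
          then have "c / 2 \<le> W x / 2" using c by auto
          moreover have "z / (4 * \<tau>) \<ge> 0" using xz tau by auto
          ultimately show ?thesis using xz by linarith
        qed
      qed
    qed
  qed
  obtain Kc Kd where K: "class_Kinf Kc" "\<forall>s\<ge>0. Kd s > 0" "continuous_on {0..} Kd"
    "strict_mono_on {0..} Kd" "\<forall>s\<ge>0. Kc s \<le> M s * Kd s"
    using lemB[of M, OF m0 mc] by blast
  have "Kc (V x + z) / Kd (V x + z) \<le> W x / 2 + z / (4 * \<tau>)" if "z \<ge> 0" for x z
  proof -
    have s: "V x + z \<ge> 0" using V0[of x] that by auto
    then have "Kc (V x + z) / Kd (V x + z) \<le> M (V x + z)"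
      using K(2,5) by (simp add: divide_le_eq)
    also have "\<dots> \<le> W x / 2 + z / (4 * \<tau>)" by (rule M_le[OF that])
    finally show ?thesis .
  qed
  then show ?thesis using K by blast
qed

end
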